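(* Let $G$ be a finite group. The poset $\widetilde\Pi(G)$ is a chain (i.e., totally ordered) if and only if $G$ is a $p$-group for some prime $p$.
   Context: For a finite group $G$ and a subgroup $H\le G$, let $\pi_e(H)=\{o(x)\mid x\in H\}$ be the set of orders of elements of $H$. Let $\mathcal{L}(G)$ denote the set of all subgroups of $G$. Define an equivalence relation $\equiv$ on $\mathcal{L}(G)$ by $H_1\equiv H_2$ if and only if $\pi_e(H_1)=\pi_e(H_2)$, and denote the class of $H$ by $[H]$. The poset $\widetilde\Pi(G)$ is the set of equivalence classes $\mathcal{L}(G)/\!\equiv$ partially ordered by $[H_1]\lesssim[H_2]$ if and only if $\pi_e(H_1)\subseteq\pi_e(H_2)$. *)

theory Defs
  imports "HOL-Algebra.Algebra"
begin

definition pi_e :: "('a, 'b) monoid_scheme \<Rightarrow> 'a set \<Rightarrow> nat set" where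
  "pi_e G H = {group.ord G x | x. x \<in> H}"

text \<open>The poset of equivalence classes of subgroups modulo equal element-order sets.
  Each class [H] is represented faithfully by the set pi_e G H; the order on classes
  is inclusion of these sets.\<close>
definition Pi_tilde :: "('a, 'b) monoid_scheme \<Rightarrow> nat set set" where
  "Pi_tilde G = {pi_e G H | H. subgroup H G}"

end

theory Submission
  imports Defs "HOL-Computational_Algebra.Primes"
begin

lemma ord_dvd_card_sub:
  fixes G (structure)
  assumes "group G" "subgroup H G" "finite H" "x \<in> H"
  shows "group.ord G x dvd card H"
proof -
  interpret group G by fact
  have grpH: "group (G\<lparr>carrier := H\<rparr>)"
    by (rule subgroup.subgroup_is_group[OF assms(2) is_group])
  have xH: "x \<in> carrier (G\<lparr>carrier := H\<rparr>)" using assms(4) by simp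
  have o: "order (G\<lparr>carrier := H\<rparr>) = card H" unfolding order_def by simp
  have "x [^] card H = x [^]\<^bsub>G\<lparr>carrier := H\<rparr>\<^esub> card H" by (rule nat_pow_consistent)
  also have "\<dots> = x [^]\<^bsub>G\<lparr>carrier := H\<rparr>\<^esub> order (G\<lparr>carrier := H\<rparr>)" by (simp only: o)
  also have "\<dots> = \<one>\<^bsub>G\<lparr>carrier := H\<rparr>\<^esub>" by (rule group.pow_order_eq_1[OF grpH xH])
  also have "\<dots> = \<one>" by simp
  finally have "x [^] card H = \<one>" .
  moreover have "x \<in> carrier G" by (rule subgroup.mem_carrier[OF assms(2,4)])
  ultimately show ?thesis using pow_eq_id by blast
qed

lemma sub_order_p:
  fixes G (structure)
  assumes "group G" "subgroup H G" "card H = p" "Factorial_Ring.prime (p::nat)"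
  shows "p \<in> pi_e G H" "pi_e G H \<subseteq> {1,p}"
proof -
  interpret group G by fact
  have fin: "finite H" using assms(3,4) by (metis card.infinite not_prime_0)
  have dv: "group.ord G x dvd p" if "x \<in> H" for x
    using ord_dvd_card_sub[OF assms(1,2) fin that] assms(3) by simp
  have o: "group.ord G x \<in> {1,p}" if "x \<in> H" for x
    using dv[OF that] assms(4) by (auto simp: prime_nat_iff)
  show "pi_e G H \<subseteq> {1,p}"
  proof
    fix d assume "d \<in> pi_e G H"
    then have "d \<in> {group.ord G x | x. x \<in> H}" unfolding pi_e_def .
    then obtain y where "y \<in> H" "d = group.ord G y" by blast
    then show "d \<in> {1,p}" using o by simp
  qed
  have "card H \<ge> 2" using assms(3,4) prime_ge_2_nat by metis
  have "\<exists>x\<in>H. x \<noteq> \<one>"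
  proof (rule ccontr)
    assume "\<not> (\<exists>x\<in>H. x \<noteq> \<one>)"
    then have "H \<subseteq> {\<one>}" by auto
    then have "card H \<le> 1" using card_mono[of "{\<one>}" H] by simp
    then show False using \<open>card H \<ge> 2\<close> by simp
  qed
  then obtain x where x: "x \<in> H" "x \<noteq> \<one>" by blast
  have xc: "x \<in> carrier G" by (rule subgroup.mem_carrier[OF assms(2) x(1)])
  have "group.ord G x \<noteq> 1" using ord_eq_1[OF xc] x by simp
  then have "group.ord G x = p" using o[OF x(1)] by blast
  then show "p \<in> pi_e G H" unfolding pi_e_def using x by blast
qed

lemma ppow_orders:
  fixes G (structure)
  assumes "group G" "order G = p ^ n" "Factorial_Ring.prime (p::nat)" "x \<in> carrier G"
  shows "\<exists>k. group.ord G x = p ^ k"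
proof -
  interpret group G by fact
  have "ord x dvd p ^ n" using ord_dvd_group_order[OF assms(4)] assms(2) by simp
  then show ?thesis using divides_primepow_nat[OF assms(3)] by blast
qed

lemma down_closed:
  fixes G (structure)
  assumes "group G" "subgroup H G" "Factorial_Ring.prime (p::nat)" "x \<in> H" "group.ord G x = p ^ k" "j \<le> k"
  shows "p ^ j \<in> pi_e G H"
proof -
  interpret group G by fact
  have xc: "x \<in> carrier G" by (rule subgroup.mem_carrier[OF assms(2,4)])
  have grpH: "group (G\<lparr>carrier := H\<rparr>)"
    by (rule subgroup.subgroup_is_group[OF assms(2) is_group])
  have "x [^]\<^bsub>G\<lparr>carrier := H\<rparr>\<^esub> (p ^ (k - j)) \<in> H"
    using monoid.nat_pow_closed[OF group.is_monoid[OF grpH]] assms(4) by simp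
  then have inH: "x [^] (p ^ (k - j)) \<in> H" by (simp flip: nat_pow_consistent)
  have d: "p ^ (k - j) dvd ord x" using assms(5,6) by (simp add: le_imp_power_dvd)
  have pnz: "p ^ (k - j) \<noteq> 0" using assms(3) by simp
  have "ord (x [^] (p ^ (k - j))) = p ^ k div p ^ (k - j)"
    using ord_pow[OF xc d pnz] assms(5) by simp
  also have "\<dots> = p ^ j" using assms(3,6)
    by (metis diff_diff_cancel diff_le_self nonzero_mult_div_cancel_left pnz power_add add.commute le_add_diff_inverse)
  finally have e: "p ^ j = ord (x [^] (p ^ (k - j)))" by simp
  show ?thesis unfolding pi_e_def using inH e by blast
qed

theorem theorem2p1:
  fixes G :: "('a, 'b) monoid_scheme"
  assumes "group G" and "finite (carrier G)"
  shows "Complete_Partial_Order.chain (\<subseteq>) (Pi_tilde G) \<longleftrightarrow>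
         (\<exists>p n. Factorial_Ring.prime (p::nat) \<and> order G = p ^ n)"
proof
  interpret group G by fact
  assume ch: "Complete_Partial_Order.chain (\<subseteq>) (Pi_tilde G)"
  have noq: False if p: "Factorial_Ring.prime (p::nat)" "p dvd order G" and q: "Factorial_Ring.prime q" "q dvd order G" "p \<noteq> q" for p q
  proof -
    obtain m1 where m1: "order G = p ^ 1 * m1" using p by auto
    obtain m2 where m2: "order G = q ^ 1 * m2" using q by auto
    obtain H1 where H1: "subgroup H1 G" "card H1 = p"
      using sylow_thm[OF p(1) assms(1) m1 assms(2)] by auto
    obtain H2 where H2: "subgroup H2 G" "card H2 = q"
      using sylow_thm[OF q(1) assms(1) m2 assms(2)] by auto
    have a: "p \<in> pi_e G H1" "pi_e G H1 \<subseteq> {1,p}" using sub_order_p[OF assms(1) H1 p(1)] by auto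
    have b: "q \<in> pi_e G H2" "pi_e G H2 \<subseteq> {1,q}" using sub_order_p[OF assms(1) H2 q(1)] by auto
    have "pi_e G H1 \<in> Pi_tilde G" "pi_e G H2 \<in> Pi_tilde G" unfolding Pi_tilde_def using H1 H2 by auto
    then have "pi_e G H1 \<subseteq> pi_e G H2 \<or> pi_e G H2 \<subseteq> pi_e G H1"
      using ch unfolding chain_def by blast
    moreover have "p \<noteq> 1" "q \<noteq> 1" using p q by auto
    ultimately show False using a b q(3) by blast
  qed
  show "\<exists>p n. Factorial_Ring.prime (p::nat) \<and> order G = p ^ n"
  proof (cases "order G = 1")
    case True
    then show ?thesis by (intro exI[of _ 2] exI[of _ 0]) auto
  next
    case False
    then obtain p :: nat where p: "Factorial_Ring.prime p" "p dvd order G" using prime_factor_nat[OF False] by blast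
    obtain y where y: "order G = p ^ multiplicity p (order G) * y" "\<not> p dvd y"
      using multiplicity_decompose'[of "order G" p] not_prime_unit[of p] p(1) assms(2) order_gt_0_iff_finite
      by (metis less_not_refl2)
    have "y = 1"
    proof (rule ccontr)
      assume "y \<noteq> 1"
      then obtain q :: nat where q: "Factorial_Ring.prime q" "q dvd y" using prime_factor_nat by blast
      then have "q dvd order G" using y(1) by (metis dvd_mult)
      moreover have "p \<noteq> q" using q y by auto
      ultimately show False using noq[OF p q(1)] by blast
    qed
    then show ?thesis using p y by auto
  qed
next
  interpret group G by fact
  assume "\<exists>p n. Factorial_Ring.prime (p::nat) \<and> order G = p ^ n"
  then obtain p n where p: "Factorial_Ring.prime (p::nat)" "order G = p ^ n" by blast
  have pw: "\<exists>k. d = p ^ k" if "d \<in> pi_e G H" "subgroup H G" for d H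
  proof -
    have "d \<in> {group.ord G x | x. x \<in> H}" using that(1) unfolding pi_e_def .
    then obtain x where x: "x \<in> H" "d = group.ord G x" by blast
    have "x \<in> carrier G" by (rule subgroup.mem_carrier[OF that(2) x(1)])
    then show ?thesis using ppow_orders[OF assms(1) p(2,1)] x(2) by metis
  qed
  have dc: "p ^ j \<in> pi_e G H" if "p ^ k \<in> pi_e G H" "j \<le> k" "subgroup H G" for j k H
  proof -
    have "p ^ k \<in> {group.ord G x | x. x \<in> H}" using that(1) unfolding pi_e_def .
    then obtain x where "x \<in> H" "group.ord G x = p ^ k" by auto
    then show ?thesis using down_closed[OF assms(1) that(3) p(1)] that(2) by simp
  qed
  show "Complete_Partial_Order.chain (\<subseteq>) (Pi_tilde G)"
    unfolding chain_def
  proof (intro ballI)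
    fix S1 S2 assume "S1 \<in> Pi_tilde G" "S2 \<in> Pi_tilde G"
    then obtain H1 H2 where H: "subgroup H1 G" "S1 = pi_e G H1" "subgroup H2 G" "S2 = pi_e G H2"
      unfolding Pi_tilde_def by auto
    show "S1 \<subseteq> S2 \<or> S2 \<subseteq> S1"
    proof (rule ccontr)
      assume "\<not> (S1 \<subseteq> S2 \<or> S2 \<subseteq> S1)"
      then obtain d1 d2 where d: "d1 \<in> S1" "d1 \<notin> S2" "d2 \<in> S2" "d2 \<notin> S1" by blast
      obtain a where a: "d1 = p ^ a" using pw[OF d(1)[unfolded H(2)] H(1)] by blast
      obtain b where b: "d2 = p ^ b" using pw[OF d(3)[unfolded H(4)] H(3)] by blast
      show False
      proof (cases "a \<le> b")
        case True
        have "p ^ a \<in> pi_e G H2" using dc[of b H2 a] d(3) b H(3,4) True by simp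
        then show ?thesis using d(2) a H(4) by simp
      next
        case False
        then have "b \<le> a" by simp
        then have "p ^ b \<in> pi_e G H1" using dc[of a H1 b] d(1) a H(1,2) by simp
        then show ?thesis using d(4) b H(2) by simp
      qed
    qed
  qed
qed

end
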